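(* Consider the $q$-composite random key predistribution scheme on $n$ sensors with key pool size $P_n$ and key ring size $K_n$, where $q$ is a fixed positive integer (not depending on $n$) and $q\le K_n\le P_n$. Suppose an adversary captures a uniformly random set of $m=m(n)$ sensors and learns all keys in their key rings, and let $p_{\textnormal{compromised}}$ denote the probability that the secure link between two (distinct) non-captured sensors is compromised, conditioned on these two sensors sharing at least $q$ keys. If $$m = o\!\left(\frac{P_n}{K_n}\right)\quad (n\to\infty),$$ then $p_{\textnormal{compromised}} = o(1)$, i.e., $p_{\textnormal{compromised}}\to 0$ as $n\to\infty$.
   Context: In the $q$-composite scheme, each of the $n$ sensors independently receives a key ring consisting of $K_n$ distinct keys chosen uniformly at random among all $K_n$-subsets of a pool of $P_n$ keys. Two sensors have a secure link if and only if their key rings share at least $q$ keys. The secure link between two non-captured sensors is compromised if and only if every key shared by their two key rings belongs to the key ring of at least one captured sensor. All asymptotics are as $n\to\infty$; $x_n=o(y_n)$ means $x_n/y_n\to 0$. *)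

theory Defs
  imports Complex_Main "HOL-Library.Landau_Symbols" "HOL-Library.FuncSet"
begin

definition key_rings :: "nat \<Rightarrow> nat \<Rightarrow> nat set set" where
  "key_rings P K = {A. A \<subseteq> {..<P} \<and> card A = K}"

text \<open>All outcomes
  are equally likely, so probabilities are ratios of cardinalities.\<close>
definition sample_space :: "nat \<Rightarrow> nat \<Rightarrow> nat \<Rightarrow> nat \<Rightarrow> ((nat \<Rightarrow> nat set) \<times> nat set) set" where
  "sample_space n P K m =
     {(R, M). R \<in> PiE {..<n} (\<lambda>_. key_rings P K) \<and> M \<subseteq> {..<n} \<and> card M = m}"

definition cond_event :: "nat \<Rightarrow> nat \<Rightarrow> nat \<Rightarrow> nat \<Rightarrow> nat \<Rightarrow> nat \<Rightarrow> nat \<Rightarrow> ((nat \<Rightarrow> nat set) \<times> nat set) set" where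
  "cond_event n P K q m i j =
     {(R, M) \<in> sample_space n P K m. i \<notin> M \<and> j \<notin> M \<and> card (R i \<inter> R j) \<ge> q}"

definition compromise_event :: "nat \<Rightarrow> nat \<Rightarrow> nat \<Rightarrow> nat \<Rightarrow> nat \<Rightarrow> nat \<Rightarrow> nat \<Rightarrow> ((nat \<Rightarrow> nat set) \<times> nat set) set" where
  "compromise_event n P K q m i j =
     {(R, M) \<in> cond_event n P K q m i j. R i \<inter> R j \<subseteq> (\<Union>s\<in>M. R s)}"

definition p_compromised :: "nat \<Rightarrow> nat \<Rightarrow> nat \<Rightarrow> nat \<Rightarrow> nat \<Rightarrow> nat \<Rightarrow> nat \<Rightarrow> real" where
  "p_compromised n P K q m i j =
     real (card (compromise_event n P K q m i j)) / real (card (cond_event n P K q m i j))"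

end

theory Submission imports Defs begin

definition rot :: "nat \<Rightarrow> nat \<Rightarrow> nat \<Rightarrow> nat" where
  "rot P t a = (if a + t < P then a + t else a + t - P)"

lemma rot_inj: "t < P \<Longrightarrow> inj_on (rot P t) {..<P}"
  unfolding inj_on_def rot_def by auto

lemma rot_range: "t < P \<Longrightarrow> a < P \<Longrightarrow> rot P t a < P"
  unfolding rot_def by auto

lemma rot_ring: assumes "t < P" "X \<in> key_rings P K"
  shows "rot P t ` X \<in> key_rings P K"
proof -
  have X: "X \<subseteq> {..<P}" "card X = K" using assms(2) by (auto simp: key_rings_def)
  have "inj_on (rot P t) X" using rot_inj[OF assms(1)] X(1) inj_on_subset by blast
  then show ?thesis using X rot_range[OF assms(1)] by (auto simp: key_rings_def card_image)
qed

lemma rot_count: assumes "X \<subseteq> {..<P}" "k < P"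
  shows "card {t\<in>{..<P}. k \<in> rot P t ` X} = card X"
proof -
  define g where "g a = (if a \<le> k then k - a else k + P - a)" for a
  have "{t\<in>{..<P}. k \<in> rot P t ` X} = g ` X"
  proof (rule set_eqI, rule iffI)
    fix t assume "t \<in> {t\<in>{..<P}. k \<in> rot P t ` X}"
    then obtain a where "a \<in> X" "t < P" "k = rot P t a" by auto
    moreover have "a < P" using assms `a \<in> X` by auto
    ultimately show "t \<in> g ` X" unfolding g_def rot_def
      by (intro image_eqI[of _ _ a]) (auto split: if_splits)
  next
    fix t assume "t \<in> g ` X"
    then obtain a where "a \<in> X" "t = g a" by auto
    moreover have "a < P" using assms `a \<in> X` by auto
    ultimately show "t \<in> {t\<in>{..<P}. k \<in> rot P t ` X}" unfolding g_def rot_def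
      using assms(2) by (auto intro!: image_eqI[of _ _ a])
  qed
  moreover have "inj_on g X" unfolding inj_on_def g_def using assms by (auto split: if_splits)
  ultimately show ?thesis by (simp add: card_image)
qed

lemma card_filter_sum: "finite A \<Longrightarrow> card {x\<in>A. Q x} = (\<Sum>x\<in>A. if Q x then 1 else 0 :: nat)"
  by (simp add: sum.If_cases Int_def conj_commute)

lemma shift_count:
  fixes A :: "((nat \<Rightarrow> nat set) \<times> nat set) set"
    and kf :: "(nat \<Rightarrow> nat set) \<times> nat set \<Rightarrow> nat"
  assumes fin: "finite A"
    and closed: "\<And>R M X. (R,M) \<in> A \<Longrightarrow> X \<in> key_rings P K \<Longrightarrow> (R(s:=X), M) \<in> A"
    and ring: "\<And>R M. (R,M) \<in> A \<Longrightarrow> R s \<in> key_rings P K"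
    and kind: "\<And>R M X. (R,M) \<in> A \<Longrightarrow> kf (R(s:=X), M) = kf (R,M)"
    and krange: "\<And>x. x \<in> A \<Longrightarrow> kf x < P"
  shows "P * card {x\<in>A. kf x \<in> fst x s} = K * card A"
proof -
  define phi where "phi t = (\<lambda>(R::nat \<Rightarrow> nat set, M::nat set). (R(s := rot P t ` R s), M))" for t
  have S: "card {x\<in>A. kf x \<in> rot P t ` (fst x s)} = card {x\<in>A. kf x \<in> fst x s}"
    if t: "t < P" for t
  proof -
    have into: "phi t x \<in> A" if "x \<in> A" for x
    proof -
      obtain R M where x: "x = (R,M)" by (cases x)
      have "(R(s := rot P t ` R s), M) \<in> A"
        using closed[of R M] rot_ring[OF t ring[of R M]] that x by blast
      then show ?thesis unfolding phi_def x by simp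
    qed
    have inj: "inj_on (phi t) A"
    proof (rule inj_onI)
      fix x y assume xy: "x \<in> A" "y \<in> A" "phi t x = phi t y"
      obtain R M where x: "x = (R,M)" by (cases x)
      obtain R' M' where y: "y = (R',M')" by (cases y)
      have e0: "R(s := rot P t ` R s) = R'(s := rot P t ` R' s)" "M = M'"
        using xy(3) unfolding x y phi_def by simp_all
      have e: "rot P t ` R s = rot P t ` R' s" "M = M'" "\<And>z. z \<noteq> s \<Longrightarrow> R z = R' z"
      proof -
        show "rot P t ` R s = rot P t ` R' s" using fun_cong[OF e0(1), of s] by simp
        show "M = M'" by (fact e0(2))
        fix z assume "z \<noteq> s" then show "R z = R' z" using fun_cong[OF e0(1), of z] by simp
      qed
      have "R s \<subseteq> {..<P}" "R' s \<subseteq> {..<P}" using ring xy(1,2) x y by (auto simp: key_rings_def)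
      then have "R s = R' s" using e(1) inj_on_image_eq_iff[OF rot_inj[OF t]] by blast
      then have "R = R'"
      proof -
        assume rs: "R s = R' s"
        show "R = R'"
        proof
          fix z show "R z = R' z" using rs e(3)[of z] by (cases "z = s") simp_all
        qed
      qed
      then show "x = y" using x y e(2) by simp
    qed
    have img: "phi t ` A = A"
    proof (rule card_subset_eq[OF fin])
      show "phi t ` A \<subseteq> A" using into by blast
      show "card (phi t ` A) = card A" using inj by (rule card_image)
    qed
    have eqB: "{x\<in>A. kf x \<in> fst x s} = phi t ` {x\<in>A. kf x \<in> rot P t ` (fst x s)}"
    proof -
      have "{x\<in>A. kf x \<in> fst x s} = {y \<in> phi t ` A. kf y \<in> fst y s}" using img by simp
      also have "\<dots> = phi t ` {x\<in>A. kf (phi t x) \<in> fst (phi t x) s}" by blast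
      also have "{x\<in>A. kf (phi t x) \<in> fst (phi t x) s} = {x\<in>A. kf x \<in> rot P t ` (fst x s)}"
      proof (rule Collect_cong)
        fix x :: "(nat \<Rightarrow> nat set) \<times> nat set"
        obtain R M where x: "x = (R,M)" by (cases x)
        show "(x \<in> A \<and> kf (phi t x) \<in> fst (phi t x) s) = (x \<in> A \<and> kf x \<in> rot P t ` fst x s)"
          unfolding x phi_def using kind[of R M] by auto
      qed
      finally show ?thesis .
    qed
    have injS: "inj_on (phi t) {x\<in>A. kf x \<in> rot P t ` (fst x s)}"
      by (rule inj_on_subset[OF inj]) blast
    show ?thesis unfolding eqB by (rule card_image[OF injS, symmetric])
  qed
  have "(\<Sum>t<P. card {x\<in>A. kf x \<in> rot P t ` (fst x s)}) = (\<Sum>t<P. card {x\<in>A. kf x \<in> fst x s})"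
    by (rule sum.cong) (simp_all add: S)
  then have "P * card {x\<in>A. kf x \<in> fst x s} = (\<Sum>t<P. card {x\<in>A. kf x \<in> rot P t ` (fst x s)})"
    by simp
  also have "\<dots> = (\<Sum>t<P. \<Sum>x\<in>A. if kf x \<in> rot P t ` (fst x s) then 1 else 0)"
    using fin by (simp add: card_filter_sum)
  also have "\<dots> = (\<Sum>x\<in>A. \<Sum>t<P. if kf x \<in> rot P t ` (fst x s) then 1 else 0)"
    by (rule sum.swap)
  also have "\<dots> = (\<Sum>x\<in>A. card {t\<in>{..<P}. kf x \<in> rot P t ` (fst x s)})"
    by (rule sum.cong[OF refl], rule card_filter_sum[symmetric]) simp
  also have "\<dots> = (\<Sum>x\<in>A. K)"
  proof (rule sum.cong)
    fix x assume xA: "x \<in> A"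
    obtain R M where x: "x = (R,M)" by (cases x)
    have "R s \<in> key_rings P K" using ring xA x by blast
    then have "R s \<subseteq> {..<P}" "card (R s) = K" by (auto simp: key_rings_def)
    then show "card {t\<in>{..<P}. kf x \<in> rot P t ` (fst x s)} = K"
      using rot_count[of "R s" P "kf x"] krange[OF xA] x by simp
  qed simp
  finally show ?thesis by simp
qed


lemma fin_C: "finite (cond_event n P K q m i j)"
proof -
  have "finite (key_rings P K)" unfolding key_rings_def
    by (rule finite_subset[of _ "Pow {..<P}"]) auto
  then have f1: "finite (PiE {..<n} (\<lambda>_. key_rings P K) \<times> Pow {..<n})"
    by (intro finite_cartesian_product finite_PiE) auto
  have "cond_event n P K q m i j \<subseteq> PiE {..<n} (\<lambda>_. key_rings P K) \<times> Pow {..<n}"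
    unfolding cond_event_def sample_space_def by auto
  then show ?thesis using f1 finite_subset by blast
qed

lemma bound:
  assumes q: "q > 0" and ij: "i < n" "j < n"
  shows "real P * real (card (compromise_event n P K q m i j))
         \<le> real K * real m * real (card (cond_event n P K q m i j))"
proof -
  define C where "C = cond_event n P K q m i j"
  define E where "E = compromise_event n P K q m i j"
  define kf where "kf x = Min (fst x i \<inter> fst x j)" for x :: "(nat \<Rightarrow> nat set) \<times> nat set"
  define A where "A s = {x\<in>C. s \<in> snd x}" for s
  define B where "B s = {x\<in>A s. kf x \<in> fst x s}" for s
  have finC: "finite C" unfolding C_def by (rule fin_C)
  have Cmem: "R \<in> PiE {..<n} (\<lambda>_. key_rings P K) \<and> M \<subseteq> {..<n} \<and> card M = m
      \<and> i \<notin> M \<and> j \<notin> M \<and> q \<le> card (R i \<inter> R j)" if "(R,M) \<in> C" for R M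
    using that unfolding C_def cond_event_def sample_space_def by auto
  have Cmem': "(R,M) \<in> C" if "R \<in> PiE {..<n} (\<lambda>_. key_rings P K)" "M \<subseteq> {..<n}" "card M = m"
      "i \<notin> M" "j \<notin> M" "q \<le> card (R i \<inter> R j)" for R M
    using that unfolding C_def cond_event_def sample_space_def by auto
  have kfin: "kf (R,M) \<in> R i \<inter> R j" "kf (R,M) < P" if "(R,M) \<in> C" for R M
  proof -
    have c: "q \<le> card (R i \<inter> R j)" using Cmem[OF that] by blast
    have "R \<in> PiE {..<n} (\<lambda>_. key_rings P K)" using Cmem[OF that] by blast
    then have "R i \<in> key_rings P K" using ij PiE_mem by blast
    then have sub: "R i \<subseteq> {..<P}" unfolding key_rings_def by blast
    have ne: "R i \<inter> R j \<noteq> {}" using c q by auto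
    have fi: "finite (R i \<inter> R j)" using c q card.infinite by force
    show k: "kf (R,M) \<in> R i \<inter> R j" unfolding kf_def using Min_in[OF fi ne] by simp
    then show "kf (R,M) < P" using sub by auto
  qed
  have EB: "E \<subseteq> (\<Union>s\<in>{..<n}. B s)"
  proof
    fix x assume xE: "x \<in> E"
    obtain R M where x: "x = (R,M)" by (cases x)
    have xC: "(R,M) \<in> C" and cov: "R i \<inter> R j \<subseteq> (\<Union>s\<in>M. R s)"
      using xE x unfolding E_def C_def compromise_event_def by auto
    then obtain s where s: "s \<in> M" "kf (R,M) \<in> R s" using kfin(1)[OF xC] by blast
    have "s < n" using s(1) Cmem[OF xC] by blast
    then show "x \<in> (\<Union>s\<in>{..<n}. B s)" using s xC x unfolding B_def A_def by auto
  qed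
  have cardE: "card E \<le> (\<Sum>s<n. card (B s))"
  proof -
    have "card E \<le> card (\<Union>s\<in>{..<n}. B s)"
      by (rule card_mono[OF _ EB]) (auto simp: B_def A_def finC)
    also have "\<dots> \<le> (\<Sum>s<n. card (B s))" by (rule card_UN_le) simp
    finally show ?thesis .
  qed
  have AB: "P * card (B s) = K * card (A s)" if sn: "s < n" for s
    unfolding B_def
  proof (rule shift_count)
    show "finite (A s)" unfolding A_def using finC by simp
    fix R M X assume RM: "(R,M) \<in> A s"
    then have RC: "(R,M) \<in> C" and sM: "s \<in> M" unfolding A_def by auto
    have si: "s \<noteq> i" "s \<noteq> j" using Cmem[OF RC] sM by auto
    show "R s \<in> key_rings P K" using Cmem[OF RC] sn PiE_mem by blast
    show "kf (R(s:=X), M) = kf (R,M)" unfolding kf_def using si by simp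
    assume X: "X \<in> key_rings P K"
    have "R(s:=X) \<in> PiE (insert s {..<n}) (\<lambda>_. key_rings P K)"
      using PiE_fun_upd[of X "\<lambda>_. key_rings P K" s R "{..<n}"] X Cmem[OF RC] by blast
    moreover have "insert s {..<n} = {..<n}" using sn by auto
    ultimately have "R(s:=X) \<in> PiE {..<n} (\<lambda>_. key_rings P K)" by simp
    then have "(R(s:=X), M) \<in> C" using Cmem'[of "R(s:=X)" M] Cmem[OF RC] si by simp
    then show "(R(s:=X), M) \<in> A s" unfolding A_def using sM by simp
  next
    fix x assume "x \<in> A s"
    then have xC: "x \<in> C" unfolding A_def by simp
    obtain R M where x: "x = (R,M)" by (cases x)
    show "kf x < P" using kfin(2)[of R M] xC x by simp
  qed
  have sumA: "(\<Sum>s<n. card (A s)) = m * card C"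
  proof -
    have "(\<Sum>s<n. card (A s)) = (\<Sum>s<n. \<Sum>x\<in>C. if s \<in> snd x then 1 else 0)"
      unfolding A_def by (rule sum.cong[OF refl], rule card_filter_sum[OF finC])
    also have "\<dots> = (\<Sum>x\<in>C. \<Sum>s<n. if s \<in> snd x then 1 else 0)" by (rule sum.swap)
    also have "\<dots> = (\<Sum>x\<in>C. m)"
    proof (rule sum.cong[OF refl])
      fix x assume xC: "x \<in> C"
      obtain R M where x: "x = (R,M)" by (cases x)
      have M: "M \<subseteq> {..<n}" "card M = m" using Cmem[of R M] xC x by auto
      have "(\<Sum>s<n. if s \<in> snd x then 1 else 0) = card {s\<in>{..<n}. s \<in> snd x}"
        by (rule card_filter_sum[symmetric]) simp
      also have "{s\<in>{..<n}. s \<in> snd x} = M" using M(1) x by auto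
      finally show "(\<Sum>s<n. if s \<in> snd x then 1 else 0) = m" using M(2) by simp
    qed
    finally show ?thesis by simp
  qed
  have "P * card E \<le> (\<Sum>s<n. P * card (B s))"
    using mult_le_mono2[OF cardE, of P] by (simp add: sum_distrib_left)
  also have "\<dots> = (\<Sum>s<n. K * card (A s))" by (rule sum.cong[OF refl]) (simp add: AB)
  also have "\<dots> = K * (m * card C)" by (simp add: sum_distrib_left[symmetric] sumA)
  finally have "P * card E \<le> K * m * card C" by simp
  then have "real (P * card E) \<le> real (K * m * card C)" by (simp only: of_nat_le_iff)
  then show ?thesis unfolding E_def C_def by simp
qed


lemma pbound:
  assumes q: "q > 0" "q \<le> K" "K \<le> P" and ij: "i < n" "j < n"
  shows "p_compromised n P K q m i j \<le> real m * real K / real P"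
proof -
  have P: "real P > 0" using q by simp
  note b = bound[OF q(1) ij, of P K m]
  show ?thesis
  proof (cases "card (cond_event n P K q m i j) = 0")
    case True
    then show ?thesis unfolding p_compromised_def by simp
  next
    case False
    then have c: "real (card (cond_event n P K q m i j)) > 0" by simp
    show ?thesis unfolding p_compromised_def using b c P
      by (simp add: divide_le_eq le_divide_eq mult.commute mult.left_commute)
  qed
qed

theorem theorem1:
  fixes q :: nat and P K m i j :: "nat \<Rightarrow> nat"
  assumes q_pos: "q > 0"
    and qK: "\<And>n. q \<le> K n" and KP: "\<And>n. K n \<le> P n"
    and room: "eventually (\<lambda>n. m n + 2 \<le> n) sequentially"
    and pair: "eventually (\<lambda>n. i n < n \<and> j n < n \<and> i n \<noteq> j n) sequentially"
    and m_small: "(\<lambda>n. real (m n)) \<in> o(\<lambda>n. real (P n) / real (K n))"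
  shows "(\<lambda>n. p_compromised n (P n) (K n) q (m n) (i n) (j n)) \<longlonglongrightarrow> 0"
proof (rule tendsto_sandwich[of "\<lambda>_. 0" _ _ "\<lambda>n. real (m n) * real (K n) / real (P n)"])
  show "\<forall>\<^sub>F n in sequentially. 0 \<le> p_compromised n (P n) (K n) q (m n) (i n) (j n)"
    unfolding p_compromised_def by simp
  show "\<forall>\<^sub>F n in sequentially. p_compromised n (P n) (K n) q (m n) (i n) (j n)
          \<le> real (m n) * real (K n) / real (P n)"
    using pair by eventually_elim (intro pbound q_pos qK KP, auto)
  show "(\<lambda>_. 0) \<longlonglongrightarrow> (0::real)" by simp
  have "(\<lambda>n. real (m n) / (real (P n) / real (K n))) \<longlonglongrightarrow> 0"
    using smalloD_tendsto[OF m_small] by simp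
  then show "(\<lambda>n. real (m n) * real (K n) / real (P n)) \<longlonglongrightarrow> 0" by simp
qed

end
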